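(* Let $\mu\in P_2(\mathbb{R}^d)$ be a probabilistic frame which is not tight, and let $\delta:=\lambda_d(\mu)-\lambda_1(\mu)>0$. Then for every tight probabilistic frame $\nu\in P_2(\mathbb{R}^d)$, $$W_2(\mu,\nu)\ge\frac{\delta}{4\,(M_2(\mu)+M_2(\nu))}.$$
   Context: For $p\ge1$, $P_p(\mathbb{R}^d)$ denotes the set of Borel probability measures $\mu$ on $\mathbb{R}^d$ with $M_p^p(\mu):=\int\|x\|^p\,d\mu(x)<\infty$, equipped with the $p$-Wasserstein distance $W_p(\mu,\nu)=\big(\inf_{\gamma\in\Gamma(\mu,\nu)}\iint\|x-y\|^p\,d\gamma(x,y)\big)^{1/p}$, where $\Gamma(\mu,\nu)$ is the set of couplings of $\mu$ and $\nu$. A probability measure $\mu$ on $\mathbb{R}^d$ is a probabilistic frame if there exist $0<A\le B<\infty$ with $A\|x\|^2\le\int\langle x,y\rangle^2\,d\mu(y)\le B\|x\|^2$ for all $x$; it is tight if this holds with $A=B$. For $\mu\in P_2(\mathbb{R}^d)$, $S_\mu=\int yy^\top d\mu(y)$ is the frame operator and $\lambda_1(\mu)\le\dots\le\lambda_d(\mu)$ denote its eigenvalues. *)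

theory Defs
  imports "HOL-Probability.Probability"
begin

text \<open>Probability measures on R^d (d = CARD('n)) with finite second moment.\<close>
definition P2 :: "(real^'n) measure \<Rightarrow> bool" where
  "P2 \<mu> \<longleftrightarrow> prob_space \<mu> \<and> sets \<mu> = sets borel \<and> integrable \<mu> (\<lambda>x. norm x ^ 2)"

definition M2 :: "(real^'n) measure \<Rightarrow> real" where
  "M2 \<mu> = sqrt (\<integral>x. norm x ^ 2 \<partial>\<mu>)"

definition coupling :: "((real^'n) \<times> (real^'n)) measure \<Rightarrow> (real^'n) measure \<Rightarrow> (real^'n) measure \<Rightarrow> bool" where
  "coupling \<gamma> \<mu> \<nu> \<longleftrightarrow> prob_space \<gamma> \<and> sets \<gamma> = sets borel \<and>
      distr \<gamma> borel fst = \<mu> \<and> distr \<gamma> borel snd = \<nu>"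

definition W2 :: "(real^'n) measure \<Rightarrow> (real^'n) measure \<Rightarrow> real" where
  "W2 \<mu> \<nu> = sqrt (Inf {(\<integral>p. norm (fst p - snd p) ^ 2 \<partial>\<gamma>) | \<gamma>. coupling \<gamma> \<mu> \<nu>})"

definition prob_frame :: "(real^'n) measure \<Rightarrow> bool" where
  "prob_frame \<mu> \<longleftrightarrow> (\<exists>A B. 0 < A \<and> A \<le> B \<and>
      (\<forall>x. A * norm x ^ 2 \<le> (\<integral>y. (x \<bullet> y) ^ 2 \<partial>\<mu>) \<and> (\<integral>y. (x \<bullet> y) ^ 2 \<partial>\<mu>) \<le> B * norm x ^ 2))"

definition tight_prob_frame :: "(real^'n) measure \<Rightarrow> bool" where
  "tight_prob_frame \<mu> \<longleftrightarrow> (\<exists>A. 0 < A \<and> (\<forall>x. (\<integral>y. (x \<bullet> y) ^ 2 \<partial>\<mu>) = A * norm x ^ 2))"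

definition frame_op :: "(real^'n) measure \<Rightarrow> real^'n^'n" where
  "frame_op \<mu> = (\<chi> i j. \<integral>y. y $ i * y $ j \<partial>\<mu>)"

definition eigenvalues :: "real^'n^'n \<Rightarrow> real set" where
  "eigenvalues S = {l. \<exists>v. v \<noteq> 0 \<and> S *v v = l *\<^sub>R v}"

definition lambda_min :: "(real^'n) measure \<Rightarrow> real" where
  "lambda_min \<mu> = Min (eigenvalues (frame_op \<mu>))"

definition lambda_max :: "(real^'n) measure \<Rightarrow> real" where
  "lambda_max \<mu> = Max (eigenvalues (frame_op \<mu>))"

end

theory Submission
  imports Defs
begin

lemma cs_real:
  fixes X F G :: real
  assumes h: "\<And>t. t > 0 \<Longrightarrow> X \<le> (t*F + G/t)/2" and F: "F \<ge> 0" and G: "G \<ge> 0"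
  shows "X \<le> sqrt F * sqrt G"
proof (cases "F > 0 \<and> G > 0")
  case True
  define t where "t = sqrt G / sqrt F"
  have t: "t > 0" using True by (simp add: t_def)
  have "t * F = sqrt F * sqrt G" using True
    by (simp add: t_def field_simps)
  moreover have "G / t = sqrt F * sqrt G" using True
    by (simp add: t_def field_simps)
  ultimately show ?thesis using h[OF t] by simp
next
  case False
  hence z: "F = 0 \<or> G = 0" using F G by auto
  show ?thesis
  proof (rule ccontr)
    assume "\<not> ?thesis"
    hence X: "X > 0" using z by auto
    show False
    proof (cases "F = 0")
      case True
      define t where "t = G / X + 1"
      have tp: "t > 0" using X G by (simp add: t_def) (smt (verit) divide_nonneg_pos)
      have a1: "X \<le> G / t / 2" using h[OF tp] True by simp
      have a2: "G / t < X" using X G tp unfolding t_def by (simp add: field_simps)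
      have a3: "G / t \<ge> 0" using G tp by simp
      have k: "\<And>u::real. X \<le> u / 2 \<Longrightarrow> u < X \<Longrightarrow> 0 \<le> u \<Longrightarrow> False" by linarith
      show False by (rule k[OF a1 a2 a3])
    next
      case False
      hence G0: "G = 0" using z by simp
      define t where "t = X / (F + 1)"
      have tp: "t > 0" using X F by (simp add: t_def)
      have a1: "X \<le> t * F / 2" using h[OF tp] G0 by simp
      have a2: "t * F < X" using X F unfolding t_def by (simp add: field_simps)
      have a3: "t * F \<ge> 0" using F tp by simp
      have k: "\<And>u::real. X \<le> u / 2 \<Longrightarrow> u < X \<Longrightarrow> 0 \<le> u \<Longrightarrow> False" by linarith
      show False by (rule k[OF a1 a2 a3])
    qed
  qed
qed

lemma cs_int:
  fixes f g :: "'a \<Rightarrow> real"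
  assumes f: "f \<in> borel_measurable M" and g: "g \<in> borel_measurable M"
    and f2: "integrable M (\<lambda>x. f x ^ 2)" and g2: "integrable M (\<lambda>x. g x ^ 2)"
  shows "integrable M (\<lambda>x. f x * g x)"
    and "(\<integral>x. \<bar>f x * g x\<bar> \<partial>M) \<le> sqrt (\<integral>x. f x ^ 2 \<partial>M) * sqrt (\<integral>x. g x ^ 2 \<partial>M)"
proof -
  have b: "\<And>x t. t > 0 \<Longrightarrow> \<bar>f x * g x\<bar> \<le> (t * f x ^ 2 + g x ^ 2 / t) / 2"
  proof -
    fix x and t :: real assume t: "t > 0"
    have "0 \<le> (t * \<bar>f x\<bar> - \<bar>g x\<bar>)^2" by simp
    hence "2 * t * \<bar>f x * g x\<bar> \<le> t^2 * f x ^2 + g x ^2"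
      by (simp add: power2_eq_square algebra_simps abs_mult)
    thus "\<bar>f x * g x\<bar> \<le> (t * f x ^ 2 + g x ^ 2 / t) / 2" using t
      by (simp add: field_simps power2_eq_square)
  qed
  have ib: "\<And>t. integrable M (\<lambda>x. (t * f x ^ 2 + g x ^ 2 / t) / 2)"
    using f2 g2 by auto
  show i: "integrable M (\<lambda>x. f x * g x)"
    by (rule Bochner_Integration.integrable_bound[OF ib[of 1]]) (use f g b[of 1] in auto)
  show "(\<integral>x. \<bar>f x * g x\<bar> \<partial>M) \<le> sqrt (\<integral>x. f x ^ 2 \<partial>M) * sqrt (\<integral>x. g x ^ 2 \<partial>M)"
  proof (rule cs_real)
    fix t :: real assume t: "t > 0"
    have "(\<integral>x. \<bar>f x * g x\<bar> \<partial>M) \<le> (\<integral>x. (t * f x ^ 2 + g x ^ 2 / t) / 2 \<partial>M)"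
      by (rule integral_mono) (use i ib b t in auto)
    also have "\<dots> = (t * (\<integral>x. f x ^ 2 \<partial>M) + (\<integral>x. g x ^ 2 \<partial>M) / t) / 2"
      using f2 g2 by simp
    finally show "(\<integral>x. \<bar>f x * g x\<bar> \<partial>M) \<le> (t * (\<integral>x. f x ^ 2 \<partial>M) + (\<integral>x. g x ^ 2 \<partial>M) / t) / 2" .
  qed (auto)
qed
lemma meas_borel:
  assumes "sets M = sets borel" "f \<in> borel_measurable borel"
  shows "f \<in> borel_measurable M"
  using assms measurable_cong_sets[of M borel borel borel] by simp

lemma quad:
  fixes \<mu> :: "(real^'n) measure"
  assumes s: "sets \<mu> = sets borel" and i2: "integrable \<mu> (\<lambda>x. norm x ^ 2)"
  shows "v \<bullet> (frame_op \<mu> *v v) = (\<integral>y. (v \<bullet> y)^2 \<partial>\<mu>)"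
proof -
  have ij: "integrable \<mu> (\<lambda>y. y$i * y$j)" for i j
  proof (rule Bochner_Integration.integrable_bound[OF i2])
    show "(\<lambda>y. y$i * y$j) \<in> borel_measurable \<mu>" by (rule meas_borel[OF s]) measurable
    show "AE x in \<mu>. norm (x $ i * x $ j) \<le> norm (norm x ^ 2)"
    proof
      fix x :: "real^'n"
      have "\<bar>x$i\<bar> * \<bar>x$j\<bar> \<le> norm x * norm x"
        by (intro mult_mono component_le_norm_cart) auto
      thus "norm (x $ i * x $ j) \<le> norm (norm x ^ 2)" by (simp add: abs_mult power2_eq_square)
    qed
  qed
  have "v \<bullet> (frame_op \<mu> *v v) = (\<Sum>i\<in>UNIV. \<Sum>j\<in>UNIV. v$i * v$j * (\<integral>y. y$i * y$j \<partial>\<mu>))"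
    by (simp add: inner_vec_def matrix_vector_mult_def frame_op_def sum_distrib_left mult_ac)
  also have "\<dots> = (\<integral>y. (\<Sum>i\<in>UNIV. \<Sum>j\<in>UNIV. v$i * v$j * (y$i * y$j)) \<partial>\<mu>)"
    using ij by (simp add: integral_sum)
  also have "\<dots> = (\<integral>y. (v \<bullet> y)^2 \<partial>\<mu>)"
    by (rule Bochner_Integration.integral_cong) 
       (simp_all add: inner_vec_def power2_eq_square sum_product mult_ac)
  finally show ?thesis .
qed


lemma sq_tri:
  fixes a b c :: "'a::real_normed_vector"
  assumes "norm c \<le> norm a + norm b"
  shows "norm c ^ 2 \<le> (norm a + norm b)^2" "(norm a + norm b)^2 \<le> 2 * norm a ^ 2 + 2 * norm b ^ 2"
proof -
  show "norm c ^ 2 \<le> (norm a + norm b)^2" using assms by (simp add: power_mono)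
  have "0 \<le> (norm a - norm b)^2" by simp
  thus "(norm a + norm b)^2 \<le> 2 * norm a ^ 2 + 2 * norm b ^ 2" by (simp add: power2_eq_square algebra_simps)
qed

lemma sq_bnd:
  fixes a b :: "'a::real_normed_vector"
  shows "norm (a - b) ^ 2 \<le> 2 * norm a ^ 2 + 2 * norm b ^ 2" "norm (a + b) ^ 2 \<le> 2 * norm a ^ 2 + 2 * norm b ^ 2"
    "norm (a + b) ^ 2 \<le> (norm a + norm b)^2"
  using sq_tri[OF norm_triangle_ineq4[of a b]] sq_tri[OF norm_triangle_ineq[of a b]] by linarith+

lemma meas_prod:
  fixes \<gamma> :: "((real^'n) \<times> (real^'n)) measure"
  assumes "sets \<gamma> = sets borel" "f \<in> ((borel :: (real^'n) measure) \<Otimes>\<^sub>M (borel :: (real^'n) measure)) \<rightarrow>\<^sub>M N"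
  shows "f \<in> \<gamma> \<rightarrow>\<^sub>M N"
proof -
  have "sets \<gamma> = sets ((borel :: (real^'n) measure) \<Otimes>\<^sub>M (borel :: (real^'n) measure))"
    using assms(1) by (metis borel_prod)
  thus ?thesis using measurable_cong_sets[of \<gamma> "(borel :: (real^'n) measure) \<Otimes>\<^sub>M (borel :: (real^'n) measure)" N N] assms(2) by blast
qed

lemma eig_bound:
  fixes \<mu> \<nu> :: "(real^'n) measure"
  assumes P\<mu>: "P2 \<mu>" and P\<nu>: "P2 \<nu>" and tA: "\<And>x. (\<integral>y. (x \<bullet> y)^2 \<partial>\<nu>) = A * norm x ^ 2"
    and cpl: "coupling \<gamma> \<mu> \<nu>" and l: "l \<in> eigenvalues (frame_op \<mu>)"
  shows "\<bar>l - A\<bar> \<le> sqrt (\<integral>p. norm (fst p - snd p) ^ 2 \<partial>\<gamma>) * (M2 \<mu> + M2 \<nu>)"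
proof -
  obtain v where v0: "v \<noteq> 0" and ev: "frame_op \<mu> *v v = l *\<^sub>R v"
    using l unfolding eigenvalues_def by auto
  have s\<mu>: "sets \<mu> = sets borel" and i\<mu>: "integrable \<mu> (\<lambda>x. norm x ^ 2)"
    using P\<mu> unfolding P2_def by auto
  have s\<nu>: "sets \<nu> = sets borel" and i\<nu>: "integrable \<nu> (\<lambda>x. norm x ^ 2)"
    using P\<nu> unfolding P2_def by auto
  have s\<gamma>: "sets \<gamma> = sets borel" and d1: "distr \<gamma> borel fst = \<mu>" and d2: "distr \<gamma> borel snd = \<nu>"
    using cpl unfolding coupling_def by auto
  have mf: "fst \<in> \<gamma> \<rightarrow>\<^sub>M (borel :: (real^'n) measure)"
    by (rule meas_prod[OF s\<gamma>]) measurable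
  have ms: "snd \<in> \<gamma> \<rightarrow>\<^sub>M (borel :: (real^'n) measure)"
    by (rule meas_prod[OF s\<gamma>]) measurable
  have int1: "integral\<^sup>L \<mu> f = (\<integral>p. f (fst p) \<partial>\<gamma>)" if "f \<in> borel_measurable borel" for f :: "real^'n \<Rightarrow> real"
    using integral_distr[OF mf that] d1 by simp
  have int2: "integral\<^sup>L \<nu> f = (\<integral>p. f (snd p) \<partial>\<gamma>)" if "f \<in> borel_measurable borel" for f :: "real^'n \<Rightarrow> real"
    using integral_distr[OF ms that] d2 by simp
  have ig1: "integrable \<gamma> (\<lambda>p. norm (fst p) ^ 2)"
    using integrable_distr_eq[OF mf, of "\<lambda>x. norm x ^ 2"] d1 i\<mu> by simp
  have ig2: "integrable \<gamma> (\<lambda>p. norm (snd p) ^ 2)"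
    using integrable_distr_eq[OF ms, of "\<lambda>x. norm x ^ 2"] d2 i\<nu> by simp
  have M\<mu>: "M2 \<mu> = sqrt (\<integral>p. norm (fst p) ^ 2 \<partial>\<gamma>)"
    unfolding M2_def by (subst int1) auto
  have M\<nu>: "M2 \<nu> = sqrt (\<integral>p. norm (snd p) ^ 2 \<partial>\<gamma>)"
    unfolding M2_def by (subst int2) auto
  define D where "D p = norm (fst p - snd p)" for p :: "(real^'n) \<times> (real^'n)"
  define E where "E p = norm (fst p + snd p)" for p :: "(real^'n) \<times> (real^'n)"
  have mD: "D \<in> borel_measurable \<gamma>" unfolding D_def by (rule meas_prod[OF s\<gamma>]) measurable
  have mE: "E \<in> borel_measurable \<gamma>" unfolding E_def by (rule meas_prod[OF s\<gamma>]) measurable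
  have iD: "integrable \<gamma> (\<lambda>p. D p ^ 2)"
  proof (rule Bochner_Integration.integrable_bound[of _ "\<lambda>p. 2 * norm (fst p) ^ 2 + 2 * norm (snd p) ^ 2"])
    show "integrable \<gamma> (\<lambda>p. 2 * norm (fst p) ^ 2 + 2 * norm (snd p) ^ 2)" using ig1 ig2 by auto
    show "(\<lambda>p. D p ^ 2) \<in> borel_measurable \<gamma>" using mD by measurable
    show "AE p in \<gamma>. norm (D p ^ 2) \<le> norm (2 * norm (fst p) ^ 2 + 2 * norm (snd p) ^ 2)"
      using sq_bnd unfolding D_def by (auto intro!: AE_I2)
  qed
  have iE: "integrable \<gamma> (\<lambda>p. E p ^ 2)"
  proof (rule Bochner_Integration.integrable_bound[of _ "\<lambda>p. 2 * norm (fst p) ^ 2 + 2 * norm (snd p) ^ 2"])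
    show "integrable \<gamma> (\<lambda>p. 2 * norm (fst p) ^ 2 + 2 * norm (snd p) ^ 2)" using ig1 ig2 by auto
    show "(\<lambda>p. E p ^ 2) \<in> borel_measurable \<gamma>" using mE by measurable
    show "AE p in \<gamma>. norm (E p ^ 2) \<le> norm (2 * norm (fst p) ^ 2 + 2 * norm (snd p) ^ 2)"
      using sq_bnd unfolding E_def by (auto intro!: AE_I2)
  qed
  have mNf: "(\<lambda>p. norm (fst p)) \<in> borel_measurable \<gamma>" by (rule meas_prod[OF s\<gamma>]) measurable
  have mNs: "(\<lambda>p. norm (snd p)) \<in> borel_measurable \<gamma>" by (rule meas_prod[OF s\<gamma>]) measurable
  define a where "a = (\<integral>p. norm (fst p) ^ 2 \<partial>\<gamma>)"
  define b where "b = (\<integral>p. norm (snd p) ^ 2 \<partial>\<gamma>)"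
  define c where "c = (\<integral>p. D p ^ 2 \<partial>\<gamma>)"
  have a0: "a \<ge> 0" unfolding a_def by simp
  have b0: "b \<ge> 0" unfolding b_def by simp
  have c0: "c \<ge> 0" unfolding c_def by simp
  have ps: "norm (x + y) ^ 2 \<le> norm x ^ 2 + 2 * (norm x * norm y) + norm y ^ 2" for x y :: "real^'n"
    using sq_bnd(3)[of x y] by (simp add: power2_sum mult.assoc)
  note xy = cs_int[OF mNf mNs ig1 ig2]
  note DE = cs_int[OF mD mE iD iE]
  have "(\<integral>p. E p ^ 2 \<partial>\<gamma>) \<le> (\<integral>p. norm (fst p) ^ 2 + 2 * (norm (fst p) * norm (snd p)) + norm (snd p) ^ 2 \<partial>\<gamma>)"
    by (rule integral_mono) (use iE ig1 ig2 xy(1) ps in \<open>auto simp: E_def\<close>)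
  also have "\<dots> = a + 2 * (\<integral>p. \<bar>norm (fst p) * norm (snd p)\<bar> \<partial>\<gamma>) + b"
    using ig1 ig2 xy(1) by (simp add: a_def b_def)
  also have "\<dots> \<le> a + 2 * (sqrt a * sqrt b) + b"
    using xy(2) unfolding a_def b_def by simp
  also have "\<dots> = (sqrt a + sqrt b)^2"
    using a0 b0 by (simp add: power2_sum)
  finally have "sqrt (\<integral>p. E p ^ 2 \<partial>\<gamma>) \<le> sqrt a + sqrt b"
    using a0 b0 by (metis real_le_lsqrt real_sqrt_ge_zero add_nonneg_nonneg integral_nonneg_AE AE_I2 zero_le_power2)
  hence Eb: "sqrt (\<integral>p. E p ^ 2 \<partial>\<gamma>) \<le> M2 \<mu> + M2 \<nu>"
    using M\<mu> M\<nu> a_def b_def by simp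
  have mq: "(\<lambda>y. (v \<bullet> y)^2) \<in> borel_measurable (borel :: (real^'n) measure)"
    by (intro borel_measurable_continuous_onI continuous_intros)
  have qb: "(v \<bullet> x)^2 \<le> norm v ^ 2 * norm x ^ 2" for x :: "real^'n"
    by (metis Cauchy_Schwarz_ineq2 abs_le_square_iff abs_of_nonneg mult_nonneg_nonneg norm_ge_zero power_mult_distrib)
  have iq1: "integrable \<gamma> (\<lambda>p. (v \<bullet> fst p)^2)"
    by (rule Bochner_Integration.integrable_bound[of _ "\<lambda>p. norm v ^ 2 * norm (fst p) ^ 2"])
       (use ig1 qb in \<open>auto intro!: AE_I2 meas_prod[OF s\<gamma>]\<close>)
  have iq2: "integrable \<gamma> (\<lambda>p. (v \<bullet> snd p)^2)"
    by (rule Bochner_Integration.integrable_bound[of _ "\<lambda>p. norm v ^ 2 * norm (snd p) ^ 2"])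
       (use ig2 qb in \<open>auto intro!: AE_I2 meas_prod[OF s\<gamma>]\<close>)
  have "l * norm v ^ 2 = v \<bullet> (frame_op \<mu> *v v)"
    using ev by (simp add: power2_norm_eq_inner)
  also have "\<dots> = (\<integral>p. (v \<bullet> fst p)^2 \<partial>\<gamma>)"
    using quad[OF s\<mu> i\<mu>] int1[OF mq] by simp
  finally have Q1: "l * norm v ^ 2 = (\<integral>p. (v \<bullet> fst p)^2 \<partial>\<gamma>)" .
  have Q2: "A * norm v ^ 2 = (\<integral>p. (v \<bullet> snd p)^2 \<partial>\<gamma>)"
    using tA[of v] int2[OF mq] by simp
  have pw: "\<bar>(v \<bullet> fst p)^2 - (v \<bullet> snd p)^2\<bar> \<le> norm v ^ 2 * (D p * E p)" for p
  proof -
    have "(v \<bullet> fst p)^2 - (v \<bullet> snd p)^2 = (v \<bullet> (fst p - snd p)) * (v \<bullet> (fst p + snd p))"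
      by (simp add: inner_diff_right inner_add_right power2_eq_square algebra_simps)
    hence "\<bar>(v \<bullet> fst p)^2 - (v \<bullet> snd p)^2\<bar> = \<bar>v \<bullet> (fst p - snd p)\<bar> * \<bar>v \<bullet> (fst p + snd p)\<bar>"
      by (simp add: abs_mult)
    also have "\<dots> \<le> (norm v * D p) * (norm v * E p)"
      unfolding D_def E_def by (intro mult_mono Cauchy_Schwarz_ineq2) auto
    finally show ?thesis by (simp add: power2_eq_square mult_ac)
  qed
  have "\<bar>l - A\<bar> * norm v ^ 2 = \<bar>\<integral>p. (v \<bullet> fst p)^2 - (v \<bullet> snd p)^2 \<partial>\<gamma>\<bar>"
    using iq1 iq2 by (simp add: Q1[symmetric] Q2[symmetric] left_diff_distrib[symmetric] abs_mult)
  also have "\<dots> \<le> (\<integral>p. \<bar>(v \<bullet> fst p)^2 - (v \<bullet> snd p)^2\<bar> \<partial>\<gamma>)"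
    by (rule integral_abs_bound)
  also have "\<dots> \<le> (\<integral>p. norm v ^ 2 * \<bar>D p * E p\<bar> \<partial>\<gamma>)"
    by (rule integral_mono) (use iq1 iq2 DE(1) pw in \<open>auto simp: D_def E_def\<close>)
  also have "\<dots> = norm v ^ 2 * (\<integral>p. \<bar>D p * E p\<bar> \<partial>\<gamma>)" by simp
  also have "\<dots> \<le> norm v ^ 2 * (sqrt c * sqrt (\<integral>p. E p ^ 2 \<partial>\<gamma>))"
    using DE(2) unfolding c_def by (intro mult_left_mono) auto
  also have "\<dots> \<le> norm v ^ 2 * (sqrt c * (M2 \<mu> + M2 \<nu>))"
    using Eb c0 by (intro mult_left_mono) auto
  finally have "\<bar>l - A\<bar> * norm v ^ 2 \<le> norm v ^ 2 * (sqrt c * (M2 \<mu> + M2 \<nu>))" .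
  moreover have "norm v ^ 2 > 0" using v0 by simp
  ultimately have "\<bar>l - A\<bar> \<le> sqrt c * (M2 \<mu> + M2 \<nu>)" by (simp add: mult.commute)
  thus ?thesis unfolding c_def D_def by simp
qed

lemma distr_pair_snd':
  assumes M: "prob_space M" and N: "prob_space N"
  shows "distr (M \<Otimes>\<^sub>M N) N snd = N"
proof (intro measure_eqI)
  interpret N: prob_space N by fact
  interpret M: prob_space M by fact
  fix A assume A: "A \<in> sets (distr (M \<Otimes>\<^sub>M N) N snd)"
  from A have "emeasure (distr (M \<Otimes>\<^sub>M N) N snd) A = emeasure (M \<Otimes>\<^sub>M N) (space M \<times> A)"
    by (auto simp add: emeasure_distr space_pair_measure dest: sets.sets_into_space intro!: arg_cong2[where f=emeasure])
  with A show "emeasure (distr (M \<Otimes>\<^sub>M N) N snd) A = emeasure N A"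
    by (simp add: N.emeasure_pair_measure_Times M.emeasure_space_1)
qed simp

lemma Maxmin: "\<not> (finite A \<and> A \<noteq> {}) \<Longrightarrow> Max (A::real set) = Min A"
  unfolding Max.eq_fold' Min.eq_fold'
  by (cases "A = {}") (auto simp: fold_infinite)

theorem mainTheorem2:
  fixes \<mu> \<nu> :: "(real^'n) measure"
  assumes "P2 \<mu>" and "prob_frame \<mu>" and "\<not> tight_prob_frame \<mu>"
    and "P2 \<nu>" and "prob_frame \<nu>" and "tight_prob_frame \<nu>"
  shows "W2 \<mu> \<nu> \<ge> (lambda_max \<mu> - lambda_min \<mu>) / (4 * (M2 \<mu> + M2 \<nu>))"
proof -
  obtain A where tA: "\<And>x. (\<integral>y. (x \<bullet> y) ^ 2 \<partial>\<nu>) = A * norm x ^ 2"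
    using assms(6) unfolding tight_prob_frame_def by auto
  define S where "S = {(\<integral>p. norm (fst p - snd p) ^ 2 \<partial>\<gamma>) | \<gamma>. coupling \<gamma> \<mu> \<nu>}"
  define M where "M = M2 \<mu> + M2 \<nu>"
  define \<delta> where "\<delta> = lambda_max \<mu> - lambda_min \<mu>"
  have M0: "M \<ge> 0" unfolding M_def M2_def by simp
  have ps\<mu>: "prob_space \<mu>" and s\<mu>: "sets \<mu> = sets borel" using assms(1) unfolding P2_def by auto
  have ps\<nu>: "prob_space \<nu>" and s\<nu>: "sets \<nu> = sets borel" using assms(4) unfolding P2_def by auto
  have cpl: "coupling (\<mu> \<Otimes>\<^sub>M \<nu>) \<mu> \<nu>"
    unfolding coupling_def
  proof (intro conjI)
    show "prob_space (\<mu> \<Otimes>\<^sub>M \<nu>)" using ps\<mu> ps\<nu> by (rule prob_space_pair)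
    have "sets (\<mu> \<Otimes>\<^sub>M \<nu>) = sets ((borel :: (real^'n) measure) \<Otimes>\<^sub>M (borel :: (real^'n) measure))"
      by (rule sets_pair_measure_cong[OF s\<mu> s\<nu>])
    thus "sets (\<mu> \<Otimes>\<^sub>M \<nu>) = sets borel" by (metis borel_prod)
    have "distr (\<mu> \<Otimes>\<^sub>M \<nu>) borel fst = distr (\<mu> \<Otimes>\<^sub>M \<nu>) \<mu> fst"
      by (rule distr_cong) (auto simp: s\<mu>)
    thus "distr (\<mu> \<Otimes>\<^sub>M \<nu>) borel fst = \<mu>" using prob_space.distr_pair_fst[OF ps\<nu>] by simp
    have "distr (\<mu> \<Otimes>\<^sub>M \<nu>) borel snd = distr (\<mu> \<Otimes>\<^sub>M \<nu>) \<nu> snd"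
      by (rule distr_cong) (auto simp: s\<nu>)
    thus "distr (\<mu> \<Otimes>\<^sub>M \<nu>) borel snd = \<nu>" using distr_pair_snd'[OF ps\<mu> ps\<nu>] by simp
  qed
  have Sne: "S \<noteq> {}" using cpl unfolding S_def by auto
  have S0: "\<And>c. c \<in> S \<Longrightarrow> c \<ge> 0" unfolding S_def by auto
  have key: "\<delta> \<le> 2 * sqrt c * M" if cS: "c \<in> S" for c
  proof -
    obtain \<gamma> where g: "coupling \<gamma> \<mu> \<nu>" and c: "c = (\<integral>p. norm (fst p - snd p) ^ 2 \<partial>\<gamma>)"
      using cS unfolding S_def by auto
    show ?thesis
    proof (cases "finite (eigenvalues (frame_op \<mu>)) \<and> eigenvalues (frame_op \<mu>) \<noteq> {}")
      case True
      hence "lambda_max \<mu> \<in> eigenvalues (frame_op \<mu>)" "lambda_min \<mu> \<in> eigenvalues (frame_op \<mu>)"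
        unfolding lambda_max_def lambda_min_def by auto
      from this[THEN eig_bound[OF assms(1) assms(4) tA g]]
      show ?thesis unfolding \<delta>_def M_def c by linarith
    next
      case False
      hence "\<delta> = 0" unfolding \<delta>_def lambda_max_def lambda_min_def using Maxmin by simp
      thus ?thesis using M0 S0[OF cS] by simp
    qed
  qed
  have W: "W2 \<mu> \<nu> = sqrt (Inf S)" unfolding W2_def S_def by simp
  show ?thesis
  proof (cases "\<delta> > 0 \<and> M > 0")
    case False
    hence "\<delta> / (4 * M) \<le> 0" using M0
      by (auto simp: divide_nonpos_nonneg divide_nonpos_pos)
    moreover have "0 \<le> Inf S" using Sne S0 by (intro cInf_greatest) auto
    hence "0 \<le> W2 \<mu> \<nu>" unfolding W by simp
    ultimately show ?thesis unfolding \<delta>_def M_def by linarith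
  next
    case True
    define K where "K = \<delta> / (2 * M)"
    have K0: "K > 0" using True by (simp add: K_def)
    have "K ^ 2 \<le> c" if "c \<in> S" for c
    proof -
      have "K \<le> sqrt c" using key[OF that] True by (simp add: K_def field_simps)
      thus ?thesis using K0 S0[OF that] by (metis real_le_rsqrt less_imp_le power2_eq_square real_sqrt_le_iff real_sqrt_pow2 power_mono)
    qed
    hence "K ^ 2 \<le> Inf S" using Sne by (intro cInf_greatest) auto
    hence "K \<le> W2 \<mu> \<nu>" unfolding W using K0 by (simp add: real_le_rsqrt)
    moreover have "\<delta> / (4 * M) \<le> K" using True by (simp add: K_def field_simps)
    ultimately show ?thesis unfolding \<delta>_def M_def by linarith
  qed
qed

end
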